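(* Let $G$ be a finite simple graph and let $\overrightarrow{G}$ be the directed graph obtained by replacing every edge $xy$ of $G$ by the two directed edges $\overrightarrow{xy}$ and $\overrightarrow{yx}$. Let $\mathrm{m}_G=|V(G)|-r(G)-1$. If $G$ has a complete $r$-source, then the $\mathrm{m}_G$-skeleton $\Delta^{(\mathrm{m}_G)}(\overrightarrow{G})$ of $\Delta(\overrightarrow{G})$ is shellable.
   Context: For a finite directed graph $D$, the complex of directed trees $\Delta(D)$ has the directed edges of $D$ as vertices, and its faces are the edge sets of directed forests in $D$ (vertex-disjoint unions of rooted directed trees; equivalently, edge sets in which every vertex has in-degree at most $1$ and there is no directed cycle). The $k$-skeleton $\Delta^{(k)}$ consists of all faces of dimension at most $k$. $N(v)$ is the neighbour set of $v$ in $G$. A set $A\subseteq V(G)$ is strongly independent if it is independent and $N(u)\cap N(v)=\emptyset$ for distinct $u,v\in A$; $r(G)$ is the maximum size of a strongly independent set (and $\mathrm{m}_G$ is the largest $k$ for which the $k$-skeleton of $\Delta(\overrightarrow{G})$ is pure). An inclusion-maximal strongly independent set $A=\{x_1,\ldots,x_r\}$ is a complete $r$-source if $V(G)=A\cup N(x_1)\cup\cdots\cup N(x_r)$. A pure simplicial complex is shellable if its facets admit a linear order $F_1,\ldots,F_k$ such that for all $i<j$ there exist $l<j$ and a vertex $v\in F_j$ with $F_i\cap F_j\subseteq F_l\cap F_j=F_j\setminus\{v\}$. *)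

theory Defs
  imports Main
begin

definition simple_graph :: "'a set \<Rightarrow> ('a \<Rightarrow> 'a \<Rightarrow> bool) \<Rightarrow> bool" where
  "simple_graph V E \<longleftrightarrow> finite V \<and>
     (\<forall>x y. E x y \<longrightarrow> x \<in> V \<and> y \<in> V \<and> x \<noteq> y \<and> E y x)"

text \<open>Arcs of the doubled digraph: every edge xy gives arcs (x,y) and (y,x).\<close>
definition doubled_arcs :: "'a set \<Rightarrow> ('a \<Rightarrow> 'a \<Rightarrow> bool) \<Rightarrow> ('a \<times> 'a) set" where
  "doubled_arcs V E = {(x, y). x \<in> V \<and> y \<in> V \<and> E x y}"

text \<open>Complex of directed trees: edge sets of directed forests
  (in-degree at most one, no directed cycle).\<close>
definition dtree_complex :: "('a \<times> 'a) set \<Rightarrow> ('a \<times> 'a) set set" where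
  "dtree_complex D = {F. F \<subseteq> D \<and> (\<forall>u w v. (u, v) \<in> F \<longrightarrow> (w, v) \<in> F \<longrightarrow> u = w) \<and> acyclic F}"

definition skeleton :: "'b set set \<Rightarrow> int \<Rightarrow> 'b set set" where
  "skeleton K k = {F \<in> K. int (card F) - 1 \<le> k}"

definition facets :: "'b set set \<Rightarrow> 'b set set" where
  "facets K = {F \<in> K. \<forall>G \<in> K. F \<subseteq> G \<longrightarrow> G = F}"

definition pure :: "'b set set \<Rightarrow> bool" where
  "pure K \<longleftrightarrow> (\<exists>d. \<forall>F \<in> facets K. card F = d)"

definition shellable :: "'b set set \<Rightarrow> bool" where
  "shellable K \<longleftrightarrow> pure K \<and>
     (\<exists>fs. distinct fs \<and> set fs = facets K \<and>
        (\<forall>i j. i < j \<and> j < length fs \<longrightarrow>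
           (\<exists>l < j. \<exists>v \<in> fs ! j.
              fs ! i \<inter> fs ! j \<subseteq> fs ! l \<inter> fs ! j \<and> fs ! l \<inter> fs ! j = fs ! j - {v})))"

definition nbhd :: "('a \<Rightarrow> 'a \<Rightarrow> bool) \<Rightarrow> 'a \<Rightarrow> 'a set" where
  "nbhd E v = {u. E v u}"

definition strongly_independent :: "'a set \<Rightarrow> ('a \<Rightarrow> 'a \<Rightarrow> bool) \<Rightarrow> 'a set \<Rightarrow> bool" where
  "strongly_independent V E A \<longleftrightarrow> A \<subseteq> V \<and> (\<forall>u \<in> A. \<forall>v \<in> A. \<not> E u v) \<and>
     (\<forall>u \<in> A. \<forall>v \<in> A. u \<noteq> v \<longrightarrow> nbhd E u \<inter> nbhd E v = {})"

definition strong_indep_number :: "'a set \<Rightarrow> ('a \<Rightarrow> 'a \<Rightarrow> bool) \<Rightarrow> nat" where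
  "strong_indep_number V E = Max {card A | A. strongly_independent V E A}"

definition complete_r_source :: "'a set \<Rightarrow> ('a \<Rightarrow> 'a \<Rightarrow> bool) \<Rightarrow> 'a set \<Rightarrow> bool" where
  "complete_r_source V E A \<longleftrightarrow> strongly_independent V E A \<and>
     (\<forall>B. strongly_independent V E B \<and> A \<subseteq> B \<longrightarrow> B = A) \<and>
     card A = strong_indep_number V E \<and>
     V = A \<union> (\<Union>x \<in> A. nbhd E x)"

definition mG :: "'a set \<Rightarrow> ('a \<Rightarrow> 'a \<Rightarrow> bool) \<Rightarrow> int" where
  "mG V E = int (card V) - int (strong_indep_number V E) - 1"

end

theory Submission imports Defs begin

definition indeg1 :: "('a \<times> 'a) set \<Rightarrow> bool" where
  "indeg1 F \<longleftrightarrow> (\<forall>u w v. (u, v) \<in> F \<longrightarrow> (w, v) \<in> F \<longrightarrow> u = w)"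

lemma dtree_iff: "F \<in> dtree_complex D \<longleftrightarrow> F \<subseteq> D \<and> indeg1 F \<and> acyclic F"
  unfolding dtree_complex_def indeg1_def by blast

lemma rtrancl_to_root:
  assumes "(a, b) \<in> P\<^sup>*" "b \<notin> snd ` P" shows "a = b"
  using assms by (cases rule: rtranclE) force+

lemma root_unique:
  assumes "indeg1 P" "(a, u) \<in> P\<^sup>*" "a \<notin> snd ` P"
  shows "\<And>b. (b, u) \<in> P\<^sup>* \<Longrightarrow> b \<notin> snd ` P \<Longrightarrow> a = b"
  using assms(2)
proof (induction rule: rtrancl_induct)
  case base
  then show ?case using rtrancl_to_root assms(3) by metis
next
  case (step y z)
  have yz: "(y, z) \<in> P" by fact
  have bz: "(b, z) \<in> P\<^sup>*" and bR: "b \<notin> snd ` P" by fact+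
  have IH: "\<And>b. (b, y) \<in> P\<^sup>* \<Longrightarrow> b \<notin> snd ` P \<Longrightarrow> a = b" by fact
  from bz show ?case
  proof (cases rule: rtranclE)
    case base
    then have "z \<notin> snd ` P" using bR by simp
    moreover have "z \<in> snd ` P" using yz by force
    ultimately show ?thesis by blast
  next
    case (step y')
    then have "y' = y" using assms(1) yz unfolding indeg1_def by blast
    then show ?thesis using IH bR step(1) by blast
  qed
qed

lemma card_heads:
  assumes "finite P" "indeg1 P" shows "card (snd ` P) = card P"
proof -
  have "inj_on snd P" using assms(2) unfolding indeg1_def inj_on_def by auto
  then show ?thesis by (simp add: card_image)
qed

lemma pow2_sum_less:
  fixes S T :: "nat set"
  assumes "finite S" "finite T" "m \<in> S" "m \<notin> T" "\<forall>x\<in>(S-T)\<union>(T-S). x \<le> m"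
  shows "(\<Sum>i\<in>T. (2::nat)^i) < (\<Sum>i\<in>S. 2^i)"
proof -
  define U where "U = {x. m < x}"
  have eq: "S \<inter> U = T \<inter> U" using assms(5) unfolding U_def by force
  have T: "T = (T \<inter> U) \<union> (T \<inter> {0..<m})" using assms(4) unfolding U_def by (auto simp: U_def) (metis nat_neq_iff)
  have "(\<Sum>i\<in>T. (2::nat)^i) = (\<Sum>i\<in>T \<inter> U. 2^i) + (\<Sum>i\<in>T \<inter> {0..<m}. 2^i)"
    by (subst T, rule sum.union_disjoint) (use assms(2) U_def in auto)
  also have "(\<Sum>i\<in>T \<inter> {0..<m}. (2::nat)^i) \<le> (\<Sum>i\<in>{0..<m}. 2^i)"
    by (rule sum_mono2) auto
  also have "\<dots> = 2^m - 1" by (rule sum_power2)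
  finally have t: "(\<Sum>i\<in>T. (2::nat)^i) \<le> (\<Sum>i\<in>T \<inter> U. 2^i) + (2^m - 1)" by simp
  have "(\<Sum>i\<in>S \<inter> U \<union> {m}. (2::nat)^i) \<le> (\<Sum>i\<in>S. 2^i)"
    by (rule sum_mono2) (use assms in auto)
  moreover have "(\<Sum>i\<in>S \<inter> U \<union> {m}. (2::nat)^i) = (\<Sum>i\<in>S \<inter> U. 2^i) + 2^m"
    by (subst sum.union_disjoint) (use assms(1) U_def in auto)
  ultimately have s: "(\<Sum>i\<in>T \<inter> U. (2::nat)^i) + 2^m \<le> (\<Sum>i\<in>S. 2^i)" using eq by simp
  have "2^m - 1 < (2::nat)^m" by simp
  then show ?thesis using t s by linarith
qed

lemma rtrancl_in_V:
  assumes "(z, u) \<in> P\<^sup>*" "z \<in> V" "P \<subseteq> V \<times> V" shows "u \<in> V"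
  using assms by (induction rule: rtrancl_induct) auto

locale src =
  fixes V :: "'a set" and E :: "'a \<Rightarrow> 'a \<Rightarrow> bool" and A :: "'a set"
  assumes sg: "simple_graph V E" and cr: "complete_r_source V E A"
begin

definition "D = doubled_arcs V E"
definition "F0 = {(x, y). x \<in> A \<and> E x y}"
definition "face F \<longleftrightarrow> F \<subseteq> D \<and> indeg1 F \<and> acyclic F"

lemma finV: "finite V" using sg unfolding simple_graph_def by auto
lemma DV: "D \<subseteq> V \<times> V" unfolding D_def doubled_arcs_def by auto
lemma finD: "finite D" using DV finV by (meson finite_SigmaI finite_subset)
lemma si: "strongly_independent V E A" using cr unfolding complete_r_source_def by (elim conjE)
lemma Vcov: "V = A \<union> (\<Union>x \<in> A. nbhd E x)" using cr unfolding complete_r_source_def by (elim conjE)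
lemma rdef: "card A = strong_indep_number V E" using cr unfolding complete_r_source_def by (elim conjE)
lemma AV: "A \<subseteq> V" using si unfolding strongly_independent_def by (elim conjE)
lemma rn: "card A \<le> card V" by (rule card_mono[OF finV AV])
lemma F0D: "F0 \<subseteq> D" using sg unfolding F0_def D_def doubled_arcs_def simple_graph_def by auto

lemma center_unique: assumes "(a, b) \<in> F0" "(a', b) \<in> F0" shows "a = a'"
proof (rule ccontr)
  assume ne: "a \<noteq> a'"
  have dis: "\<forall>u \<in> A. \<forall>v \<in> A. u \<noteq> v \<longrightarrow> nbhd E u \<inter> nbhd E v = {}"
    using si unfolding strongly_independent_def by (elim conjE)
  have "a \<in> A" "a' \<in> A" "E a b" "E a' b" using assms unfolding F0_def by auto
  then have "b \<in> nbhd E a \<inter> nbhd E a'" unfolding nbhd_def by auto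
  then show False using dis ne \<open>a \<in> A\<close> \<open>a' \<in> A\<close> by blast
qed

lemma cover: assumes "y \<in> V" "y \<notin> A" shows "\<exists>x\<in>A. E x y"
proof -
  have "V = A \<union> (\<Union>x \<in> A. nbhd E x)" using Vcov .
  then have "y \<in> (\<Union>x \<in> A. nbhd E x)" using assms by blast
  then show ?thesis unfolding nbhd_def by auto
qed

lemma face_fin: "face F \<Longrightarrow> finite F" using finD unfolding face_def by (auto intro: finite_subset)

lemma add:
  assumes "face P" "card P < card V - card A"
  shows "\<exists>e\<in>F0. e \<notin> P \<and> face (insert e P)"
proof -
  have fP: "finite P" using assms(1) face_fin by blast
  have i1: "indeg1 P" and ac: "acyclic P" and PD: "P \<subseteq> D" using assms(1) unfolding face_def by auto
  define Rt where "Rt = V - snd ` P"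
  have hV: "snd ` P \<subseteq> V" using PD DV by auto
  have cRt: "card Rt = card V - card P"
    unfolding Rt_def using card_Diff_subset[OF finite_imageI[OF fP] hV] card_heads[OF fP i1] by simp
  define \<sigma> where "\<sigma> y = (if y \<in> A then y else SOME x. x \<in> A \<and> E x y)" for y
  have \<sigma>1: "\<sigma> y \<in> A \<and> E (\<sigma> y) y" if "y \<in> V" "y \<notin> A" for y
    using cover[OF that] someI_ex[of "\<lambda>x. x \<in> A \<and> E x y"] that unfolding \<sigma>_def by auto
  have "\<sigma> ` Rt \<subseteq> A" using \<sigma>1 unfolding Rt_def \<sigma>_def by auto
  moreover have "card A < card Rt" using cRt assms(2) by linarith
  ultimately have "\<not> inj_on \<sigma> Rt" using card_inj_on_le[of \<sigma> Rt A] finite_subset[OF AV finV] by linarith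
  then obtain y1 y2 where y: "y1 \<in> Rt" "y2 \<in> Rt" "y1 \<noteq> y2" "\<sigma> y1 = \<sigma> y2"
    unfolding inj_on_def by blast
  have RtV: "Rt \<subseteq> V" unfolding Rt_def by auto
  have "\<exists>x y. x \<in> A \<and> E x y \<and> y \<in> Rt \<and> (y, x) \<notin> P\<^sup>*"
  proof (cases "y1 \<in> A")
    case True
    then have "y2 \<notin> A" using y unfolding \<sigma>_def by auto
    then have "\<sigma> y2 \<in> A \<and> E (\<sigma> y2) y2" using \<sigma>1 y RtV by auto
    moreover have "\<sigma> y2 = y1" using y True unfolding \<sigma>_def by auto
    moreover have "(y2, y1) \<notin> P\<^sup>*" using rtrancl_to_root[of y2 y1 P] y unfolding Rt_def by auto
    ultimately show ?thesis using y by metis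
  next
    case False
    show ?thesis
    proof (cases "y2 \<in> A")
      case True
      have "\<sigma> y1 \<in> A \<and> E (\<sigma> y1) y1" using \<sigma>1[of y1] y(1) RtV False by blast
      moreover have "\<sigma> y1 = y2" using y True unfolding \<sigma>_def by auto
      moreover have "(y1, y2) \<notin> P\<^sup>*" using rtrancl_to_root[of y1 y2 P] y unfolding Rt_def by auto
      ultimately show ?thesis using y by metis
    next
      case F2: False
      have a: "\<sigma> y1 \<in> A \<and> E (\<sigma> y1) y1" using \<sigma>1[of y1] y(1) RtV False by blast
      have b: "\<sigma> y1 \<in> A \<and> E (\<sigma> y1) y2" using \<sigma>1[of y2] y(2,4) RtV F2 by auto
      have "\<not> ((y1, \<sigma> y1) \<in> P\<^sup>* \<and> (y2, \<sigma> y1) \<in> P\<^sup>*)"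
        using root_unique[OF i1, of y1 "\<sigma> y1" y2] y unfolding Rt_def by auto
      then show ?thesis using a b y by metis
    qed
  qed
  then obtain x y where xy: "x \<in> A" "E x y" "y \<in> Rt" "(y, x) \<notin> P\<^sup>*" by blast
  have e0: "(x, y) \<in> F0" using xy unfolding F0_def by auto
  have nP: "(x, y) \<notin> P" using xy unfolding Rt_def by force
  have "face (insert (x, y) P)"
    unfolding face_def using PD F0D e0 ac xy i1 unfolding indeg1_def Rt_def by force
  then show ?thesis using e0 nP by blast
qed


lemma case2:
  assumes fF: "face F" and fF': "face F'" and cF: "card F = card V - card A"
    and cF': "card F' = card V - card A" and v: "v \<in> F" "v \<notin> F'"
    and sd: "(F - F') \<union> (F' - F) \<subseteq> F0"
  shows "\<exists>e\<in>F' - F. face (insert e (F - {v}))"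
proof (rule ccontr)
  assume H: "\<not> ?thesis"
  define P where "P = F - {v}"
  have fP: "finite P" using face_fin[OF fF] unfolding P_def by auto
  have i1: "indeg1 P" and PD: "P \<subseteq> D" using fF unfolding face_def P_def indeg1_def by auto
  have i1': "indeg1 F'" and F'D: "F' \<subseteq> D" and ac': "acyclic F'" using fF' unfolding face_def by auto
  have i1F: "indeg1 F" and acF: "acyclic F" using fF unfolding face_def by auto
  have acP: "acyclic P" using acF unfolding P_def by (meson Diff_subset acyclic_subset)
  define Rt where "Rt = V - snd ` P"
  have hV: "snd ` P \<subseteq> V" using PD DV by auto
  have cP: "card P = card V - card A - 1" using cF v(1) face_fin[OF fF] unfolding P_def by simp
  have "card F > 0" using v(1) face_fin[OF fF] card_gt_0_iff by blast
  then have pos: "card V - card A \<ge> 1" using cF by linarith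
  have cRt: "card Rt = card A + 1"
    unfolding Rt_def using card_Diff_subset[OF finite_imageI[OF fP] hV] card_heads[OF fP i1] cP pos rn
    by simp
  have clos: "(z, a) \<in> P\<^sup>*" if ab: "(a, b) \<in> F'" and zb: "(z, b) \<in> P\<^sup>*" and z: "z \<in> Rt" for z a b
  proof (cases "(a, b) \<in> F")
    case True
    then have abP: "(a, b) \<in> P" using v ab unfolding P_def by auto
    then have "z \<noteq> b" using z unfolding Rt_def by force
    with zb obtain y' where "(z, y') \<in> P\<^sup>*" "(y', b) \<in> P" by (auto elim: rtranclE)
    moreover have "y' = a" using i1 abP \<open>(y', b) \<in> P\<close> unfolding indeg1_def by blast
    ultimately show ?thesis by simp
  next
    case False
    then have nf: "\<not> face (insert (a, b) P)" using H ab unfolding P_def by blast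
    have abF0: "(a, b) \<in> F0" using sd ab False by auto
    have "insert (a, b) P \<subseteq> D" using PD F0D abF0 by auto
    then have "\<not> indeg1 (insert (a, b) P) \<or> (b, a) \<in> P\<^sup>*" using nf acP unfolding face_def by auto
    then show ?thesis
    proof
      assume ni: "\<not> indeg1 (insert (a, b) P)"
      have "\<exists>a'. a' \<noteq> a \<and> (a', b) \<in> P"
      proof (rule ccontr)
        assume "\<not> ?thesis"
        then have "indeg1 (insert (a, b) P)" using i1 unfolding indeg1_def by auto
        then show False using ni by simp
      qed
      then obtain a' where a': "a' \<noteq> a" "(a', b) \<in> P" by blast
      then have "(a', b) \<in> F" unfolding P_def by auto
      show ?thesis
      proof (cases "(a', b) \<in> F'")
        case True
        then show ?thesis using i1' ab a' unfolding indeg1_def by blast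
      next
        case False
        then have "(a', b) \<in> F0" using sd \<open>(a', b) \<in> F\<close> by auto
        then show ?thesis using center_unique abF0 a' by blast
      qed
    next
      assume "(b, a) \<in> P\<^sup>*"
      then show ?thesis using zb by simp
    qed
  qed
  have wf: "wf F'" using finite_acyclic_wf[OF face_fin[OF fF'] ac'] .
  have PVV: "P \<subseteq> V \<times> V" using PD DV by auto
  have ex: "\<exists>u. (z, u) \<in> P\<^sup>* \<and> u \<in> V - snd ` F'" if z: "z \<in> Rt" for z
  proof -
    have zin: "z \<in> {u. (z, u) \<in> P\<^sup>*}" by simp
    obtain u where u: "u \<in> {u. (z, u) \<in> P\<^sup>*}" "\<forall>y. (y, u) \<in> F' \<longrightarrow> y \<notin> {u. (z, u) \<in> P\<^sup>*}"
      using wfE_min[OF wf zin] by blast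
    have "u \<notin> snd ` F'"
    proof
      assume "u \<in> snd ` F'"
      then obtain y where "(y, u) \<in> F'" by force
      then show False using u clos[of y u z] z by auto
    qed
    moreover have "u \<in> V" using rtrancl_in_V[of z u P V] u(1) z PVV unfolding Rt_def by auto
    ultimately show ?thesis using u by blast
  qed
  define g where "g z = (SOME u. (z, u) \<in> P\<^sup>* \<and> u \<in> V - snd ` F')" for z
  have g: "(z, g z) \<in> P\<^sup>* \<and> g z \<in> V - snd ` F'" if "z \<in> Rt" for z
    using someI_ex[OF ex[OF that]] unfolding g_def .
  have "inj_on g Rt"
  proof (rule inj_onI)
    fix z1 z2 assume "z1 \<in> Rt" "z2 \<in> Rt" "g z1 = g z2"
    then show "z1 = z2" using g[of z1] g[of z2] root_unique[OF i1, of z1 "g z1" z2] unfolding Rt_def by auto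
  qed
  moreover have "g ` Rt \<subseteq> V - snd ` F'" using g by auto
  ultimately have "card Rt \<le> card (V - snd ` F')" using card_inj_on_le[OF _ _ finite_Diff[OF finV]] by blast
  moreover have "card (V - snd ` F') = card V - card F'"
  proof -
    have "snd ` F' \<subseteq> V" using F'D DV by force
    then show ?thesis
      using card_Diff_subset[OF finite_imageI[OF face_fin[OF fF']] \<open>snd ` F' \<subseteq> V\<close>] card_heads[OF face_fin[OF fF'] i1'] by simp
  qed
  ultimately show False using cRt cF' rn by linarith
qed


lemma face_subset: "face F \<Longrightarrow> P \<subseteq> F \<Longrightarrow> face P"
  unfolding face_def indeg1_def using acyclic_subset by blast

lemma Kmem: "F \<in> skeleton (dtree_complex (doubled_arcs V E)) (mG V E) \<longleftrightarrow> face F \<and> card F \<le> card V - card A"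
proof -
  have "int (card F) - 1 \<le> int (card V) - int (card A) - 1 \<longleftrightarrow> card F \<le> card V - card A"
    using rn by linarith
  then show ?thesis unfolding skeleton_def mG_def rdef[symmetric] dtree_iff face_def D_def by auto
qed

lemma facets_eq: "facets (skeleton (dtree_complex (doubled_arcs V E)) (mG V E)) = {F. face F \<and> card F = card V - card A}"
proof (intro set_eqI iffI)
  fix F assume "F \<in> facets (skeleton (dtree_complex (doubled_arcs V E)) (mG V E))"
  then have K: "face F" "card F \<le> card V - card A"
    and mx: "\<And>G. face G \<Longrightarrow> card G \<le> card V - card A \<Longrightarrow> F \<subseteq> G \<Longrightarrow> G = F"
    unfolding facets_def using Kmem by auto
  have "card F = card V - card A"
  proof (rule ccontr)
    assume "card F \<noteq> card V - card A"
    then have "card F < card V - card A" using K by simp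
    then obtain e where e: "e \<notin> F" "face (insert e F)" using add K(1) by blast
    have "card (insert e F) = card F + 1" using e face_fin[OF K(1)] by simp
    then have "insert e F = F" using mx[OF e(2)] \<open>card F < card V - card A\<close> by auto
    then show False using e by auto
  qed
  then show "F \<in> {F. face F \<and> card F = card V - card A}" using K by auto
next
  fix F assume "F \<in> {F. face F \<and> card F = card V - card A}"
  then have K: "face F" "card F = card V - card A" by auto
  have "G = F" if "face G" "card G \<le> card V - card A" "F \<subseteq> G" for G
  proof -
    have "card F \<le> card G" using card_mono[OF face_fin[OF that(1)] that(3)] .
    then have "card F = card G" using that K by simp
    then show ?thesis using card_subset_eq[OF face_fin[OF that(1)] that(3)] by simp
  qed
  then show "F \<in> facets (skeleton (dtree_complex (doubled_arcs V E)) (mG V E))"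
    unfolding facets_def using K by (auto simp: Kmem)
qed

lemma idx_ex: "\<exists>idx::('a \<times> 'a) \<Rightarrow> nat. inj_on idx D \<and> (\<forall>a\<in>F0. \<forall>b\<in>D - F0. idx a < idx b)"
proof -
  obtain h0 where h0: "bij_betw h0 F0 {0..<card F0}"
    using ex_bij_betw_finite_nat finite_subset[OF F0D finD] by blast
  obtain h1 where h1: "bij_betw h1 (D - F0) {0..<card (D - F0)}"
    using ex_bij_betw_finite_nat finite_Diff[OF finD] by blast
  have h0r: "h0 x < card F0" if "x \<in> F0" for x using h0 that unfolding bij_betw_def by auto
  define idx where "idx a = (if a \<in> F0 then h0 a else card F0 + h1 a)" for a
  have "inj_on idx D"
  proof (rule inj_onI)
    fix a b assume ab: "a \<in> D" "b \<in> D" "idx a = idx b"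
    consider "a \<in> F0" "b \<in> F0" | "a \<in> F0" "b \<notin> F0" | "a \<notin> F0" "b \<in> F0" | "a \<notin> F0" "b \<notin> F0" by blast
    then show "a = b"
    proof cases
      case 1 then show ?thesis using ab h0 unfolding idx_def bij_betw_def inj_on_def by auto
    next
      case 2 then show ?thesis using ab h0r[of a] unfolding idx_def by auto
    next
      case 3 then show ?thesis using ab h0r[of b] unfolding idx_def by auto
    next
      case 4 then show ?thesis using ab h1 unfolding idx_def bij_betw_def inj_on_def by auto
    qed
  qed
  moreover have "\<forall>a\<in>F0. \<forall>b\<in>D - F0. idx a < idx b"
  proof (intro ballI)
    fix a b assume "a \<in> F0" "b \<in> D - F0"
    then show "idx a < idx b" using h0r[of a] unfolding idx_def by simp
  qed
  ultimately show ?thesis by blast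
qed

lemma wless:
  fixes idx :: "('a \<times> 'a) \<Rightarrow> nat"
  assumes inj: "inj_on idx D" and GD: "G \<subseteq> D" and HD: "H \<subseteq> D"
    and v: "v \<in> H" "v \<notin> G" and mx: "\<forall>a\<in>(H - G) \<union> (G - H). idx a \<le> idx v"
  shows "(\<Sum>a\<in>G. (2::nat) ^ idx a) < (\<Sum>a\<in>H. 2 ^ idx a)"
proof -
  have fG: "finite G" and fH: "finite H" using GD HD finD finite_subset by auto
  have iG: "inj_on idx G" and iH: "inj_on idx H" using inj_on_subset[OF inj GD] inj_on_subset[OF inj HD] by auto
  have eG: "(\<Sum>a\<in>G. (2::nat) ^ idx a) = (\<Sum>i\<in>idx ` G. 2 ^ i)" by (simp add: sum.reindex[OF iG] o_def)
  have eH: "(\<Sum>a\<in>H. (2::nat) ^ idx a) = (\<Sum>i\<in>idx ` H. 2 ^ i)" by (simp add: sum.reindex[OF iH] o_def)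
  have vD: "v \<in> D" using v HD by auto
  have m1: "idx v \<notin> idx ` G"
  proof
    assume "idx v \<in> idx ` G"
    then obtain a where "a \<in> G" "idx v = idx a" by auto
    then have "a = v" using inj vD GD unfolding inj_on_def by auto
    then show False using v \<open>a \<in> G\<close> by simp
  qed
  have "\<forall>x\<in>(idx ` H - idx ` G) \<union> (idx ` G - idx ` H). x \<le> idx v"
    using mx by auto
  then have "(\<Sum>i\<in>idx ` G. (2::nat) ^ i) < (\<Sum>i\<in>idx ` H. 2 ^ i)"
    using pow2_sum_less[of "idx ` H" "idx ` G" "idx v"] fG fH m1 v by auto
  then show ?thesis using eG eH by simp
qed

lemma exch:
  fixes idx :: "('a \<times> 'a) \<Rightarrow> nat"
  assumes inj: "inj_on idx D" and ord: "\<forall>a\<in>F0. \<forall>b\<in>D - F0. idx a < idx b"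
    and fF: "face F" and cF: "card F = card V - card A"
    and fF': "face F'" and cF': "card F' = card V - card A"
    and ne: "F \<noteq> F'" and le: "(\<Sum>a\<in>F'. (2::nat) ^ idx a) \<le> (\<Sum>a\<in>F. 2 ^ idx a)"
  shows "\<exists>v\<in>F - F'. \<exists>e. e \<notin> F \<and> face (insert e (F - {v})) \<and>
           card (insert e (F - {v})) = card V - card A \<and>
           (\<Sum>a\<in>insert e (F - {v}). (2::nat) ^ idx a) < (\<Sum>a\<in>F. 2 ^ idx a)"
proof -
  have FD: "F \<subseteq> D" and F'D: "F' \<subseteq> D" using fF fF' unfolding face_def by auto
  have fin: "finite F" "finite F'" using face_fin fF fF' by auto
  define SD where "SD = (F - F') \<union> (F' - F)"
  have SDne: "SD \<noteq> {}" using ne unfolding SD_def by auto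
  have SDf: "finite SD" using fin unfolding SD_def by auto
  have "Max (idx ` SD) \<in> idx ` SD" using Max_in[of "idx ` SD"] SDne SDf by auto
  then obtain v where v: "v \<in> SD" "idx v = Max (idx ` SD)" by auto
  have vmax: "\<forall>a\<in>SD. idx a \<le> idx v" using v SDf by simp
  have vF: "v \<in> F"
  proof (rule ccontr)
    assume "v \<notin> F"
    then have "v \<in> F'" using v unfolding SD_def by auto
    then have "(\<Sum>a\<in>F. (2::nat) ^ idx a) < (\<Sum>a\<in>F'. 2 ^ idx a)"
      using wless[OF inj FD F'D, of v] \<open>v \<notin> F\<close> vmax unfolding SD_def by auto
    then show False using le by simp
  qed
  then have vF': "v \<notin> F'" using v unfolding SD_def by auto
  have vD: "v \<in> D" using vF FD by auto
  have "\<exists>e. e \<notin> F \<and> face (insert e (F - {v})) \<and> idx e < idx v \<and> e \<in> D"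
  proof (cases "v \<in> F0")
    case False
    have "face (F - {v})" using face_subset[OF fF] by auto
    moreover have "card (F - {v}) < card V - card A" using cF vF fin(1)
      by (metis card_Diff1_less)
    ultimately obtain e where e: "e \<in> F0" "e \<notin> F - {v}" "face (insert e (F - {v}))" using add by blast
    have "e \<noteq> v" using e False by auto
    moreover have "idx e < idx v" using ord e(1) vD False by auto
    ultimately show ?thesis using e F0D by (intro exI[of _ e]) auto
  next
    case True
    have "SD \<subseteq> F0"
    proof
      fix a assume a: "a \<in> SD"
      then have "a \<in> D" using FD F'D unfolding SD_def by auto
      show "a \<in> F0"
      proof (rule ccontr)
        assume "a \<notin> F0"
        then have "idx v < idx a" using ord True \<open>a \<in> D\<close> by auto
        then show False using vmax a by auto
      qed
    qed
    then obtain e where e: "e \<in> F' - F" "face (insert e (F - {v}))"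
      using case2[OF fF fF' cF cF' vF vF'] unfolding SD_def by blast
    have "e \<in> SD" using e unfolding SD_def by auto
    then have "idx e \<le> idx v" using vmax by auto
    moreover have "idx e \<noteq> idx v" using inj e(1) vF' vD F'D unfolding inj_on_def by auto
    ultimately show ?thesis using e F'D by (intro exI[of _ e]) auto
  qed
  then obtain e where e: "e \<notin> F" "face (insert e (F - {v}))" "idx e < idx v" "e \<in> D" by blast
  have "card (insert e (F - {v})) = card V - card A"
  proof -
    have "card (F - {v}) = card F - 1" using vF fin(1) by simp
    moreover have "card F > 0" using vF fin(1) card_gt_0_iff by blast
    ultimately show ?thesis using e(1) fin(1) cF by simp
  qed
  moreover have "(\<Sum>a\<in>insert e (F - {v}). (2::nat) ^ idx a) < (\<Sum>a\<in>F. 2 ^ idx a)"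
  proof (rule wless[OF inj _ FD vF])
    show "insert e (F - {v}) \<subseteq> D" using e FD by auto
    show "v \<notin> insert e (F - {v})" using e vF by auto
    have "(F - insert e (F - {v})) \<union> (insert e (F - {v}) - F) = {v, e}" using e vF by auto
    then show "\<forall>a\<in>(F - insert e (F - {v})) \<union> (insert e (F - {v}) - F). idx a \<le> idx v"
      using e(3) by auto
  qed
  ultimately show ?thesis using e vF vF' by blast
qed

end

theorem mainTheorem6:
  fixes V :: "'a set" and E :: "'a \<Rightarrow> 'a \<Rightarrow> bool"
  assumes "simple_graph V E"
    and "\<exists>A. complete_r_source V E A"
  shows "shellable (skeleton (dtree_complex (doubled_arcs V E)) (mG V E))"
proof -
  obtain A where A: "complete_r_source V E A" using assms(2) by blast
  interpret src V E A using assms(1) A by unfold_locales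
  define K where "K = skeleton (dtree_complex (doubled_arcs V E)) (mG V E)"
  have fc: "facets K = {F. face F \<and> card F = card V - card A}" unfolding K_def by (rule facets_eq)
  have "facets K \<subseteq> Pow D" unfolding fc face_def by auto
  then have finfc: "finite (facets K)" using finD finite_subset by blast
  obtain idx :: "('a \<times> 'a) \<Rightarrow> nat" where inj: "inj_on idx D" and ord: "\<forall>a\<in>F0. \<forall>b\<in>D - F0. idx a < idx b"
    using idx_ex by blast
  define w where "w F = (\<Sum>a\<in>F. (2::nat) ^ idx a)" for F
  obtain xs where xs: "set xs = facets K" "distinct xs" using finite_distinct_list[OF finfc] by blast
  define fs where "fs = sort_key w xs"
  have fs1: "distinct fs" "set fs = facets K" using xs unfolding fs_def by auto
  have srt: "sorted (map w fs)" unfolding fs_def by simp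
  have mono: "w (fs ! i) \<le> w (fs ! j)" if "i \<le> j" "j < length fs" for i j
    using sorted_nth_mono[OF srt, of i j] that by simp
  have "\<exists>l<j. \<exists>v\<in>fs ! j. fs ! i \<inter> fs ! j \<subseteq> fs ! l \<inter> fs ! j \<and> fs ! l \<inter> fs ! j = fs ! j - {v}"
    if ij: "i < j" "j < length fs" for i j
  proof -
    define F where "F = fs ! j"
    define F' where "F' = fs ! i"
    have FK: "F \<in> facets K" "F' \<in> facets K" using fs1(2) ij unfolding F_def F'_def by auto
    have ne: "F \<noteq> F'" using fs1(1) ij unfolding F_def F'_def by (simp add: nth_eq_iff_index_eq)
    have le: "w F' \<le> w F" using mono[of i j] ij unfolding F_def F'_def by simp
    have F1: "face F" "card F = card V - card A" using FK(1) unfolding fc by auto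
    have F2: "face F'" "card F' = card V - card A" using FK(2) unfolding fc by auto
    have le': "(\<Sum>a\<in>F'. (2::nat) ^ idx a) \<le> (\<Sum>a\<in>F. 2 ^ idx a)" using le unfolding w_def .
    obtain v e where v: "v \<in> F - F'" and e: "e \<notin> F" "face (insert e (F - {v}))"
      "card (insert e (F - {v})) = card V - card A"
      "(\<Sum>a\<in>insert e (F - {v}). (2::nat) ^ idx a) < (\<Sum>a\<in>F. 2 ^ idx a)"
      using exch[OF inj ord F1 F2 ne le'] by blast
    define G where "G = insert e (F - {v})"
    have "G \<in> set fs" using e fs1(2) unfolding fc G_def by auto
    then obtain l where l: "l < length fs" "fs ! l = G" by (auto simp: in_set_conv_nth)
    have "l < j"
    proof (rule ccontr)
      assume "\<not> l < j"
      then have "w F \<le> w G" using mono[of j l] l unfolding F_def by simp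
      then show False using e(4) unfolding G_def w_def by simp
    qed
    moreover have "F' \<inter> F \<subseteq> G \<inter> F" using v unfolding G_def by auto
    moreover have "G \<inter> F = F - {v}" using e(1) v unfolding G_def by auto
    ultimately show ?thesis using v l unfolding F_def F'_def by auto
  qed
  moreover have "pure K"
    unfolding pure_def fc by auto
  ultimately show ?thesis unfolding shellable_def K_def[symmetric] using fs1 by blast
qed

end
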